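(* Let $d\ge1$ and $t\ge1$ be integers and $\nu\in(0,1)$. Define $r>0$ by \[ r^2=(1-\nu)\frac{d+2}{t(t+d)}. \] Then $\widetilde P^{(\frac d2,\frac d2-1)}_t(\cos\phi)\ge\nu$ for all $0\le\phi\le r$.
   Context: For $\alpha,\beta>-1$, $P^{(\alpha,\beta)}_t$ denotes the Jacobi polynomial of degree $t$ (orthogonal on $[-1,1]$ with respect to $(1-u)^\alpha(1+u)^\beta$), normalized by $P^{(\alpha,\beta)}_t(1)=\binom{t+\alpha}{t}$ with $\binom{x}{y}=\frac{\Gamma(x+1)}{\Gamma(y+1)\Gamma(x-y+1)}$. The normalized Jacobi polynomial is $\widetilde P^{(\alpha,\beta)}_t:=P^{(\alpha,\beta)}_t/P^{(\alpha,\beta)}_t(1)$. *)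

theory Defs
  imports "HOL-Analysis.Analysis"
begin

definition gbinom :: "real \<Rightarrow> real \<Rightarrow> real" where
  "gbinom x y = Gamma (x + 1) / (Gamma (y + 1) * Gamma (x - y + 1))"

text \<open>Jacobi polynomial of degree t (standard explicit formula,
  Szego (4.3.2)), valid for alpha, beta > -1; P(1) = binom(t+alpha, t).\<close>
definition jacobiP :: "nat \<Rightarrow> real \<Rightarrow> real \<Rightarrow> real \<Rightarrow> real" where
  "jacobiP t \<alpha> \<beta> u =
     (\<Sum>s\<le>t. gbinom (real t + \<alpha>) (real t - real s) * gbinom (real t + \<beta>) (real s)
              * ((u - 1) / 2) ^ s * ((u + 1) / 2) ^ (t - s))"

definition jacobiP_normalized :: "nat \<Rightarrow> real \<Rightarrow> real \<Rightarrow> real \<Rightarrow> real" where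
  "jacobiP_normalized t \<alpha> \<beta> u = jacobiP t \<alpha> \<beta> u / jacobiP t \<alpha> \<beta> 1"

end

theory Submission
  imports Defs "HOL-Computational_Algebra.Formal_Power_Series"
begin

lemma gbinom_eq:
  assumes "x + 1 > 0"
  shows "gbinom x (real k) = x gchoose k"
proof -
  have "x + 1 \<notin> \<int>\<^sub>\<le>\<^sub>0" using assms by (auto elim!: nonpos_Ints_cases)
  hence "x gchoose k = Gamma (x + 1) / (fact k * Gamma (x - of_nat k + 1))"
    by (rule gbinomial_Gamma)
  moreover have "Gamma (real k + 1) = fact k" using Gamma_fact[of k] by (simp add: add.commute)
  ultimately show ?thesis unfolding gbinom_def by simp
qed

lemma alt_sum:
  fixes m :: "nat \<Rightarrow> real"
  shows "(\<forall>k<n. m (Suc k) \<le> m k) \<Longrightarrow> (\<forall>k\<le>n. 0 \<le> m k) \<Longrightarrow>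
    0 \<le> (\<Sum>k\<le>n. (-1)^k * m k) \<and> (\<Sum>k\<le>n. (-1)^k * m k) \<le> m 0"
proof (induction n arbitrary: m)
  case 0
  then show ?case by simp
next
  case (Suc n)
  have h1: "\<forall>k<n. m (Suc (Suc k)) \<le> m (Suc k)" using Suc.prems by auto
  have h2: "\<forall>k\<le>n. 0 \<le> m (Suc k)" using Suc.prems by auto
  from Suc.IH[of "\<lambda>k. m (Suc k)", OF h1 h2]
  have ih: "0 \<le> (\<Sum>k\<le>n. (-1)^k * m (Suc k))" "(\<Sum>k\<le>n. (-1)^k * m (Suc k)) \<le> m 1" by auto
  have eq: "(\<Sum>k\<le>Suc n. (-1)^k * m k) = m 0 - (\<Sum>k\<le>n. (-1)^k * m (Suc k))"
    by (subst sum.atMost_Suc_shift) (simp add: sum_negf)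
  have "m 1 \<le> m 0" using Suc.prems by auto
  then show ?case using eq ih by auto
qed

lemma coeff_identity:
  fixes \<alpha> \<beta> :: real
  assumes "k \<le> t"
  shows "(\<Sum>s\<le>k. ((real t + \<alpha>) gchoose (t - s)) * ((real t + \<beta>) gchoose s) * real ((t - s) choose (k - s)))
     = ((real t + \<alpha>) gchoose (t - k)) * ((real t + \<alpha> + \<beta> + real k) gchoose k)"
proof -
  have "((real t + \<alpha>) gchoose (t - s)) * real ((t - s) choose (k - s))
      = ((real t + \<alpha>) gchoose (t - k)) * ((\<alpha> + real k) gchoose (k - s))" if "s \<le> k" for s
  proof -
    have "(t - s) choose (k - s) = (t - s) choose (t - k)"
      using binomial_symmetric[of "k - s" "t - s"] that assms by (simp add: diff_diff_eq)
    hence "real ((t - s) choose (k - s)) = (real (t - s) gchoose (t - k))"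
      by (simp add: binomial_gbinomial)
    moreover have "((real t + \<alpha>) gchoose (t - s)) * (real (t - s) gchoose (t - k))
       = ((real t + \<alpha>) gchoose (t - k)) * ((real t + \<alpha> - real (t - k)) gchoose ((t - s) - (t - k)))"
      using that assms by (intro gbinomial_trinomial_revision) simp
    moreover have "real t + \<alpha> - real (t - k) = \<alpha> + real k" using assms by (simp add: of_nat_diff)
    moreover have "(t - s) - (t - k) = k - s" using that assms by simp
    ultimately show ?thesis by simp
  qed
  hence "(\<Sum>s\<le>k. ((real t + \<alpha>) gchoose (t - s)) * ((real t + \<beta>) gchoose s) * real ((t - s) choose (k - s)))
     = (\<Sum>s\<le>k. ((real t + \<alpha>) gchoose (t - k)) * (((real t + \<beta>) gchoose s) * ((\<alpha> + real k) gchoose (k - s))))"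
    by (intro sum.cong) (auto simp: algebra_simps)
  also have "\<dots> = ((real t + \<alpha>) gchoose (t - k)) * (\<Sum>s\<le>k. ((real t + \<beta>) gchoose s) * ((\<alpha> + real k) gchoose (k - s)))"
    by (simp add: sum_distrib_left)
  also have "(\<Sum>s\<le>k. ((real t + \<beta>) gchoose s) * ((\<alpha> + real k) gchoose (k - s))) = ((real t + \<beta>) + (\<alpha> + real k)) gchoose k"
    using gbinomial_Vandermonde[of "real t + \<beta>" "\<alpha> + real k" k] by (simp add: atLeast0AtMost)
  finally show ?thesis by (simp add: algebra_simps)
qed


lemma jacobi_expand:
  fixes \<alpha> \<beta> x :: real
  assumes "\<alpha> > -1" "\<beta> > -1"
  shows "jacobiP t \<alpha> \<beta> (1 - 2*x) = (\<Sum>k\<le>t. (-1)^k * (((real t + \<alpha>) gchoose (t-k)) * ((real t + \<alpha> + \<beta> + real k) gchoose k) * x^k))"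
proof -
  define A where "A s = (real t + \<alpha>) gchoose (t - s)" for s
  define B where "B s = (real t + \<beta>) gchoose s" for s
  define g where "g s j = A s * B s * real ((t - s) choose j) * (-x)^(s+j)" for s j
  have "jacobiP t \<alpha> \<beta> (1 - 2*x) = (\<Sum>s\<le>t. A s * B s * (-x)^s * (1-x)^(t-s))"
    unfolding jacobiP_def
  proof (intro sum.cong refl)
    fix s assume "s \<in> {..t}"
    hence "real t - real s = real (t - s)" by (simp add: of_nat_diff)
    moreover have "gbinom (real t + \<alpha>) (real (t - s)) = A s" unfolding A_def
      using assms by (intro gbinom_eq) simp
    moreover have "gbinom (real t + \<beta>) (real s) = B s" unfolding B_def
      using assms by (intro gbinom_eq) simp
    moreover have "(1 - 2*x - 1) / 2 = -x" "(1 - 2*x + 1) / 2 = 1 - x" by simp_all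
    ultimately show "gbinom (real t + \<alpha>) (real t - real s) * gbinom (real t + \<beta>) (real s) *
         ((1 - 2 * x - 1) / 2) ^ s * ((1 - 2 * x + 1) / 2) ^ (t - s) = A s * B s * (-x)^s * (1-x)^(t-s)"
      by (simp only:)
  qed
  also have "\<dots> = (\<Sum>s\<le>t. \<Sum>j\<le>t-s. g s j)"
  proof (intro sum.cong refl)
    fix s
    have "(1-x)^(t-s) = (\<Sum>j\<le>t-s. real ((t-s) choose j) * (-x)^j)"
      using binomial_ring[of "-x" 1 "t-s"] by simp
    thus "A s * B s * (-x)^s * (1-x)^(t-s) = (\<Sum>j\<le>t-s. g s j)"
      unfolding g_def by (simp add: sum_distrib_left power_add mult_ac)
  qed
  also have "\<dots> = (\<Sum>(s,j)\<in>(SIGMA s:{..t}. {..t-s}). g s j)"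
    by (rule sum.Sigma) auto
  also have "(SIGMA s:{..t}. {..t-s}) = {(i,j). i+j \<le> t}" by auto
  also have "(\<Sum>(s,j)\<in>{(i,j). i+j \<le> t}. g s j) = (\<Sum>k\<le>t. \<Sum>s\<le>k. g s (k - s))"
    by (rule sum.triangle_reindex_eq)
  also have "\<dots> = (\<Sum>k\<le>t. (-1)^k * (((real t + \<alpha>) gchoose (t-k)) * ((real t + \<alpha> + \<beta> + real k) gchoose k) * x^k))"
  proof (intro sum.cong refl)
    fix k assume k: "k \<in> {..t}"
    have "(\<Sum>s\<le>k. g s (k - s)) = (\<Sum>s\<le>k. A s * B s * real ((t - s) choose (k - s))) * (-x)^k"
      unfolding sum_distrib_right g_def by (intro sum.cong refl) auto
    also have "(\<Sum>s\<le>k. A s * B s * real ((t - s) choose (k - s))) = ((real t + \<alpha>) gchoose (t - k)) * ((real t + \<alpha> + \<beta> + real k) gchoose k)"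
      unfolding A_def B_def using k by (intro coeff_identity) simp
    finally show "(\<Sum>s\<le>k. g s (k - s)) = (-1)^k * (((real t + \<alpha>) gchoose (t-k)) * ((real t + \<alpha> + \<beta> + real k) gchoose k) * x^k)"
      by (simp only: power_minus[of x k] mult.assoc mult.commute mult.left_commute)
  qed
  finally show ?thesis .
qed


lemma gchoose_pos:
  fixes r :: real
  assumes "real n < r + 1"
  shows "0 < r gchoose n"
proof -
  have "0 < (\<Prod>i=0..<n. r - of_nat i)"
    using assms by (intro prod_pos) auto
  thus ?thesis by (simp add: gbinomial_prod_rev)
qed

lemma gchoose_step:
  fixes a :: real
  shows "of_nat (Suc j) * (a gchoose Suc j) = (a - of_nat j) * (a gchoose j)"
  using gbinomial_mult_1[of a j] by (simp add: algebra_simps)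

lemma ratio:
  fixes \<alpha> \<beta> :: real
  assumes "k < t"
  defines "C \<equiv> \<lambda>k. ((real t + \<alpha>) gchoose (t-k)) * ((real t + \<alpha> + \<beta> + real k) gchoose k)"
  shows "C (Suc k) * ((\<alpha> + real k + 1) * (real k + 1)) = C k * ((real t - real k) * (real t + \<alpha> + \<beta> + real k + 1))"
proof -
  define j where "j = t - Suc k"
  define R where "R = real t + \<alpha>"
  define a where "a = real t + \<alpha> + \<beta> + real k"
  have tk: "t - k = Suc j" using assms unfolding j_def by simp
  have j1: "of_nat (Suc j) = real t - real k" using assms unfolding j_def by (simp add: of_nat_diff)
  have e1: "of_nat (Suc j) * (R gchoose Suc j) = (\<alpha> + real k + 1) * (R gchoose j)"
    using gchoose_step[of j R] assms unfolding j_def R_def by (simp add: of_nat_diff algebra_simps)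
  have e2: "of_nat (Suc k) * ((a + 1) gchoose Suc k) = (a + 1) * (a gchoose k)"
    by (rule Suc_times_gbinomial)
  have cs: "C (Suc k) = (R gchoose j) * ((a + 1) gchoose Suc k)"
    unfolding C_def R_def a_def j_def by (simp add: algebra_simps)
  have ck: "C k = (R gchoose Suc j) * (a gchoose k)"
    unfolding C_def R_def a_def using tk by simp
  have "C (Suc k) * ((\<alpha> + real k + 1) * (real k + 1))
      = ((\<alpha> + real k + 1) * (R gchoose j)) * (of_nat (Suc k) * ((a + 1) gchoose Suc k))"
    unfolding cs by (simp add: algebra_simps)
  also have "\<dots> = (of_nat (Suc j) * (R gchoose Suc j)) * ((a + 1) * (a gchoose k))"
    unfolding e1 e2 ..
  also have "\<dots> = C k * ((real t - real k) * (a + 1))"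
    unfolding ck j1 by (simp add: algebra_simps)
  finally show ?thesis unfolding a_def by (simp add: algebra_simps)
qed

lemma one_minus_cos_le: "1 - cos (\<phi>::real) \<le> \<phi>^2 / 2"
proof -
  have "cos \<phi> = 1 - 2 * sin (\<phi>/2) ^ 2" using cos_double_sin[of "\<phi>/2"] by simp
  moreover have "sin (\<phi>/2) ^ 2 \<le> (\<phi>/2)^2"
    using abs_sin_x_le_abs_x[of "\<phi>/2"] by (metis abs_ge_zero power2_abs power_mono)
  ultimately show ?thesis by (simp add: power_divide)
qed


theorem proposition3p2:
  fixes d t :: nat and \<nu> r :: real
  assumes "d \<ge> 1" and "t \<ge> 1" and "0 < \<nu>" and "\<nu> < 1"
    and "r > 0" and "r ^ 2 = (1 - \<nu>) * (real d + 2) / (real t * (real t + real d))"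
  shows "\<forall>\<phi>::real. 0 \<le> \<phi> \<and> \<phi> \<le> r \<longrightarrow>
           jacobiP_normalized t (real d / 2) (real d / 2 - 1) (cos \<phi>) \<ge> \<nu>"
proof (intro allI impI)
  fix \<phi> :: real
  assume ph: "0 \<le> \<phi> \<and> \<phi> \<le> r"
  define \<alpha> where "\<alpha> = real d / 2"
  define \<beta> where "\<beta> = real d / 2 - 1"
  define T where "T = real t * (real t + real d)"
  define x where "x = (1 - cos \<phi>) / 2"
  define C where "C = (\<lambda>k. ((real t + \<alpha>) gchoose (t-k)) * ((real t + \<alpha> + \<beta> + real k) gchoose k))"
  define m where "m = (\<lambda>k. C k * x ^ k)"
  have Tpos: "T > 0" unfolding T_def using assms by simp
  have Tr: "T * r^2 = (1 - \<nu>) * (real d + 2)" using assms(6) Tpos assms(2) unfolding T_def by simp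
  have x0: "x \<ge> 0" unfolding x_def by simp
  have "\<phi>^2 \<le> r^2" using ph by (intro power_mono) auto
  hence xr: "x \<le> r^2 / 4" using one_minus_cos_le[of \<phi>] unfolding x_def by simp
  have Tx: "T * x \<le> (1 - \<nu>) * (real d + 2) / 4"
  proof -
    have "T * x \<le> T * (r^2/4)" using xr Tpos by (intro mult_left_mono) auto
    thus ?thesis using Tr by simp
  qed
  have cosx: "cos \<phi> = 1 - 2 * x" unfolding x_def by (simp add: field_simps)
  have ab: "\<alpha> > -1" "\<beta> > -1" unfolding \<alpha>_def \<beta>_def using assms by auto
  have hP: "jacobiP t \<alpha> \<beta> (cos \<phi>) = (\<Sum>k\<le>t. (-1)^k * m k)"
    unfolding cosx m_def C_def by (rule jacobi_expand[OF ab])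
  have h1: "jacobiP t \<alpha> \<beta> 1 = C 0"
  proof -
    have "jacobiP t \<alpha> \<beta> (1 - 2 * 0) = (\<Sum>k\<le>t. (-1)^k * (C k * 0 ^ k))"
      unfolding C_def by (rule jacobi_expand[OF ab])
    also have "\<dots> = C 0"
      by (subst sum.atMost_shift) simp
    finally show ?thesis by simp
  qed
  have Cpos: "C k > 0" if "k \<le> t" for k
    unfolding C_def using that assms unfolding \<alpha>_def \<beta>_def
    by (intro mult_pos_pos gchoose_pos) (auto simp: of_nat_diff)
  have rat: "C (Suc k) * ((\<alpha> + real k + 1) * (real k + 1)) = C k * ((real t - real k) * (real t + \<alpha> + \<beta> + real k + 1))"
    if "k < t" for k
    unfolding C_def using ratio[OF that, of \<alpha> \<beta>] by simp
  have mono: "m (Suc k) \<le> m k" if "k < t" for k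
  proof -
    have ab1: "\<alpha> + \<beta> = real d - 1" unfolding \<alpha>_def \<beta>_def by simp
    have q1: "(real t - real k) * (real t + real d + real k) \<le> T"
      unfolding T_def using that by (simp add: algebra_simps)
    have q2: "0 \<le> (real t - real k)" using that by simp
    have "(real t - real k) * (real t + real d + real k) * x \<le> T * x"
      using q1 x0 by (rule mult_right_mono)
    also have "\<dots> \<le> (\<alpha> + 1)"
    proof -
      define q where "q = (1 - \<nu>) * (real d + 2)"
      have "(1 - \<nu>) * (real d + 2) \<le> 1 * (real d + 2)"
        using assms by (intro mult_right_mono) auto
      hence q1: "q \<le> real d + 2" unfolding q_def by simp
      have q2: "T * x \<le> q / 4" using Tx unfolding q_def .
      have "real d \<ge> 0" by simp
      with q1 q2 show ?thesis unfolding \<alpha>_def by linarith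
    qed
    also have "\<dots> \<le> (\<alpha> + real k + 1) * (real k + 1)"
    proof -
      have "(\<alpha> + real k + 1) * (real k + 1) = (\<alpha> + 1) + real k * (\<alpha> + real k + 2)"
        by (simp add: algebra_simps)
      moreover have "0 \<le> real k * (\<alpha> + real k + 2)" unfolding \<alpha>_def by simp
      ultimately show ?thesis by simp
    qed
    finally have ineq0: "(real t - real k) * (real t + real d + real k) * x \<le> (\<alpha> + real k + 1) * (real k + 1)" .
    have e: "real t + \<alpha> + \<beta> + real k + 1 = real t + real d + real k" using ab1 by simp
    have ineq: "(real t - real k) * (real t + \<alpha> + \<beta> + real k + 1) * x \<le> (\<alpha> + real k + 1) * (real k + 1)"
      unfolding e by (rule ineq0)
    have pos: "(\<alpha> + real k + 1) * (real k + 1) > 0" unfolding \<alpha>_def by simp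
    have "C (Suc k) * x * ((\<alpha> + real k + 1) * (real k + 1)) = C k * ((real t - real k) * (real t + \<alpha> + \<beta> + real k + 1) * x)"
    proof -
      have "C (Suc k) * x * ((\<alpha> + real k + 1) * (real k + 1)) = (C (Suc k) * ((\<alpha> + real k + 1) * (real k + 1))) * x"
        by (simp only: ac_simps)
      also have "\<dots> = (C k * ((real t - real k) * (real t + \<alpha> + \<beta> + real k + 1))) * x"
        unfolding rat[OF that] ..
      finally show ?thesis by (simp only: ac_simps)
    qed
    also have "\<dots> \<le> C k * ((\<alpha> + real k + 1) * (real k + 1))"
      using ineq Cpos[of k] that by (intro mult_left_mono) auto
    finally have "C (Suc k) * x \<le> C k" using pos by (rule mult_right_le_imp_le)
    hence "C (Suc k) * x * x^k \<le> C k * x^k" using x0 by (intro mult_right_mono) auto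
    thus ?thesis unfolding m_def by (simp add: algebra_simps)
  qed
  have mnn: "m k \<ge> 0" if "k \<le> t" for k unfolding m_def using Cpos[OF that] x0 by simp
  obtain t' where t': "t = Suc t'" using assms(2) by (cases t) auto
  have "(\<Sum>k\<le>t. (-1)^k * m k) = m 0 - (\<Sum>k\<le>t'. (-1)^k * m (Suc k))"
    unfolding t' by (subst sum.atMost_Suc_shift) (simp add: sum_negf)
  moreover have "(\<Sum>k\<le>t'. (-1)^k * m (Suc k)) \<le> m (Suc 0)"
    using alt_sum[of t' "\<lambda>k. m (Suc k)"] mono mnn unfolding t' by auto
  ultimately have lb: "jacobiP t \<alpha> \<beta> (cos \<phi>) \<ge> C 0 - C 1 * x"
    using hP unfolding m_def by simp
  have C1: "C 1 * (\<alpha> + 1) = C 0 * T"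
    using rat[of 0] assms unfolding T_def \<alpha>_def \<beta>_def by (simp add: algebra_simps)
  have C0: "C 0 > 0" using Cpos by simp
  have f1: "jacobiP_normalized t \<alpha> \<beta> (cos \<phi>) \<ge> (C 0 - C 1 * x) / C 0"
    unfolding jacobiP_normalized_def h1 using lb C0 by (simp add: divide_right_mono)
  have f2: "(C 0 - C 1 * x) / C 0 = 1 - T * x / (\<alpha> + 1)"
    using C1 C0 ab by (simp add: field_simps)
  have f3: "T * x / (\<alpha> + 1) \<le> (1 - \<nu>) / 2"
    using Tx unfolding \<alpha>_def by (simp add: field_simps)
  have "jacobiP_normalized t \<alpha> \<beta> (cos \<phi>) \<ge> \<nu>"
  proof -
    define q where "q = T * x / (\<alpha> + 1)"
    define J where "J = jacobiP_normalized t \<alpha> \<beta> (cos \<phi>)"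
    have g1: "1 - q \<le> J" using f1 f2 unfolding q_def J_def by simp
    have g2: "q \<le> (1 - \<nu>) / 2" using f3 unfolding q_def .
    from g1 g2 assms(4) have "\<nu> \<le> J" by (simp add: field_simps)
    thus ?thesis unfolding J_def .
  qed
  thus "jacobiP_normalized t (real d / 2) (real d / 2 - 1) (cos \<phi>) \<ge> \<nu>"
    unfolding \<alpha>_def \<beta>_def .
qed

end
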